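(* Let $\varepsilon>0$, $C>0$, and integers $1\le\hat d\le d$. Define the projected random sign (PRS) mechanism on input $\mathbf g\in\mathbb{R}^d$ as follows: draw a random matrix $\mathbf M=(m_{i,j})\in\mathbb{R}^{\hat d\times d}$ independently of everything else with i.i.d. entries equal to $-\sqrt3$ with probability $1/6$, $0$ with probability $2/3$, $+\sqrt3$ with probability $1/6$; set $\mathbf u=\mathbf M\mathbf g$; for each $i\in\{1,\dots,\hat d\}$ let $\bar u_i=\min\{C,\max\{-C,u_i\}\}$ and, independently across $i$, let $\tilde u_i=+C$ with probability $\frac{1}{e^{\varepsilon/\hat d}+1}+\frac{\bar u_i+C}{2C}\cdot\frac{e^{\varepsilon/\hat d}-1}{e^{\varepsilon/\hat d}+1}$ and $\tilde u_i=-C$ otherwise; output $\mathbf M^{\top}\tilde{\mathbf u}\in\mathbb{R}^d$. Consider $N$ agents with private parameters $\psi_1,\dots,\psi_N\in\Psi$ reporting in order $n=1,\dots,N$, where agent $n$ computes a gradient $\mathbf g_n\in\mathbb{R}^d$ whose conditional law given $\psi_1,\dots,\psi_N$ and previous reports $\tilde{\mathbf g}_1,\dots,\tilde{\mathbf g}_{n-1}$ depends only on $\psi_n$ and $\tilde{\mathbf g}_1,\dots,\tilde{\mathbf g}_{n-1}$, and reports $\tilde{\mathbf g}_n$ equal to the output of the PRS mechanism applied to $\mathbf g_n$ with fresh randomness. Then gradient submission with the PRS mechanism satisfies $\varepsilon$-LDP: for every $n$, all $\psi,\psi'\in\Psi$, every value of $(\tilde{\mathbf g}_1,\dots,\tilde{\mathbf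 g}_{n-1})$ and every measurable $G\subseteq\mathbb{R}^d$, $$\Pr(\tilde{\mathbf g}_n\in G\mid\psi_n=\psi,\tilde{\mathbf g}_1,\dots,\tilde{\mathbf g}_{n-1})\le e^{\varepsilon}\Pr(\tilde{\mathbf g}_n\in G\mid\psi_n=\psi',\tilde{\mathbf g}_1,\dots,\tilde{\mathbf g}_{n-1}).$$
   Context: $\Psi$ is an arbitrary set of environment parameters. *)

theory Defs
  imports "HOL-Analysis.Analysis" "HOL-Probability.Probability"
begin

definition entry_pmf :: "real pmf" where
  "entry_pmf = map_pmf (\<lambda>k::nat. if k = 0 then - sqrt 3 else if k = 1 then sqrt 3 else 0)
                 (pmf_of_set {0..<6})"

text \<open>Random matrix M in R^(dhat x d) with i.i.d. entries; rows indexed by 'k (CARD('k) = dhat),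
  columns by 'd (CARD('d) = d).\<close>
definition rand_matrix :: "(real^'d^'k) pmf" where
  "rand_matrix = map_pmf (\<lambda>f. \<chi> i j. f (i, j)) (Pi_pmf UNIV 0 (\<lambda>_. entry_pmf))"

definition clip :: "real \<Rightarrow> real \<Rightarrow> real" where
  "clip C u = min C (max (- C) u)"

definition plus_prob :: "real \<Rightarrow> nat \<Rightarrow> real \<Rightarrow> real \<Rightarrow> real" where
  "plus_prob eps dhat C u =
     1 / (exp (eps / real dhat) + 1)
     + (clip C u + C) / (2 * C) * ((exp (eps / real dhat) - 1) / (exp (eps / real dhat) + 1))"

definition PRS :: "'k::finite itself \<Rightarrow> real \<Rightarrow> real \<Rightarrow> real^'d \<Rightarrow> (real^'d) pmf" where
  "PRS _ eps C g =
     do { M \<leftarrow> (rand_matrix :: (real^'d^'k) pmf);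
          b \<leftarrow> Pi_pmf (UNIV :: 'k set) False
                 (\<lambda>i. bernoulli_pmf (plus_prob eps CARD('k) C ((M *v g) $ i)));
          return_pmf (transpose M *v (\<chi> i. if b i then C else - C)) }"

definition report_law :: "real \<Rightarrow> real \<Rightarrow> 'k::finite itself \<Rightarrow> (real^'d) measure \<Rightarrow> (real^'d) measure" where
  "report_law eps C k mu = mu \<bind> (\<lambda>g. measure_pmf (PRS k eps C g))"

end

theory Submission
  imports Defs
begin

lemma plus_prob_bounds:
  assumes "eps > 0" "C > 0" "n > 0"
  shows "1 / (exp (eps / real n) + 1) \<le> plus_prob eps n C u"
    and "plus_prob eps n C u \<le> exp (eps / real n) / (exp (eps / real n) + 1)"
proof -
  define E where "E = exp (eps / real n)"
  define t where "t = (clip C u + C) / (2 * C)"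
  have E1: "E \<ge> 1" unfolding E_def using assms by simp
  have t0: "0 \<le> t" and t1: "t \<le> 1" unfolding t_def clip_def using assms
    by (auto simp: field_simps min_def max_def)
  have eq: "plus_prob eps n C u = 1 / (E + 1) + t * ((E - 1) / (E + 1))"
    unfolding plus_prob_def E_def t_def by simp
  have "0 \<le> t * ((E - 1) / (E + 1))" using t0 E1 by simp
  then show "1 / (exp (eps / real n) + 1) \<le> plus_prob eps n C u" using eq E_def by simp
  have "t * ((E - 1) / (E + 1)) \<le> 1 * ((E - 1) / (E + 1))"
    using t1 E1 by (intro mult_right_mono) auto
  then have "plus_prob eps n C u \<le> 1 / (E + 1) + (E - 1) / (E + 1)" using eq by simp
  also have "\<dots> = E / (E + 1)" using E1 by (simp add: field_simps)
  finally show "plus_prob eps n C u \<le> exp (eps / real n) / (exp (eps / real n) + 1)"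
    unfolding E_def .
qed

lemma ratio_le:
  fixes E p p' :: real
  assumes "E \<ge> 1" "1/(E+1) \<le> p" "p \<le> E/(E+1)" "1/(E+1) \<le> p'" "p' \<le> E/(E+1)"
  shows "p \<le> E * p'" "1 - p \<le> E * (1 - p')" "0 \<le> p" "p \<le> 1"
proof -
  have "E * (1/(E+1)) \<le> E * p'" using assms by (intro mult_left_mono) auto
  then show "p \<le> E * p'" using assms by simp
  have Ep: "E + 1 > 0" using assms by simp
  have s1: "1/(E+1) + E/(E+1) = 1" using Ep by (simp add: add_divide_distrib[symmetric])
  have a1: "1 - p' \<ge> 1/(E+1)" and a2: "1 - p \<le> E/(E+1)"
    using assms s1 by linarith+
  have "E * (1/(E+1)) \<le> E * (1 - p')" using a1 assms by (intro mult_left_mono) auto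
  then show "1 - p \<le> E * (1 - p')" using a2 by simp
  have "0 < 1/(E+1)" using assms by simp
  then show "0 \<le> p" using assms by linarith
  have "E/(E+1) \<le> 1" using assms by simp
  then show "p \<le> 1" using assms by linarith
qed

definition wt :: "'k::finite itself \<Rightarrow> real \<Rightarrow> real \<Rightarrow> real^'d^'k \<Rightarrow> real^'d \<Rightarrow> ('k \<Rightarrow> bool) \<Rightarrow> real" where
  "wt _ eps C M g b = (\<Prod>i\<in>UNIV. if b i then plus_prob eps CARD('k) C ((M *v g) $ i)
                         else 1 - plus_prob eps CARD('k) C ((M *v g) $ i))"

definition outp :: "real \<Rightarrow> real^'d^'k \<Rightarrow> ('k \<Rightarrow> bool) \<Rightarrow> real^'d" where
  "outp C M b = transpose M *v (\<chi> i. if b i then C else - C)"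

lemma pp01:
  assumes "eps > 0" "C > 0" "n > 0"
  shows "0 \<le> plus_prob eps n C u" "plus_prob eps n C u \<le> 1"
  using ratio_le(3,4)[OF _ plus_prob_bounds[OF assms] plus_prob_bounds[OF assms]] assms by auto

lemma emeasure_PRS:
  assumes "eps > 0" "C > 0"
  shows "emeasure (measure_pmf (PRS TYPE('k::finite) eps C g)) A =
    (\<integral>\<^sup>+M. (\<Sum>b\<in>UNIV. ennreal (wt TYPE('k) eps C M g b) * indicator A (outp C M b)) \<partial>(rand_matrix :: (real^'d^'k) pmf))"
proof -
  have "emeasure (measure_pmf (PRS TYPE('k) eps C g)) A = (\<integral>\<^sup>+x. indicator A x \<partial>measure_pmf (PRS TYPE('k) eps C g))"
    by (simp add: nn_integral_indicator)
  also have "\<dots> = (\<integral>\<^sup>+M. (\<integral>\<^sup>+b. indicator A (outp C M b) \<partial>measure_pmf (Pi_pmf (UNIV :: 'k set) False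
                 (\<lambda>i. bernoulli_pmf (plus_prob eps CARD('k) C ((M *v g) $ i))))) \<partial>(rand_matrix :: (real^'d^'k) pmf))"
    unfolding PRS_def outp_def by simp
  also have "\<dots> = (\<integral>\<^sup>+M. (\<Sum>b\<in>UNIV. ennreal (wt TYPE('k) eps C M g b) * indicator A (outp C M b)) \<partial>(rand_matrix :: (real^'d^'k) pmf))"
  proof (rule nn_integral_cong)
    fix M :: "real^'d^'k"
    have "(\<integral>\<^sup>+b. indicator A (outp C M b) \<partial>measure_pmf (Pi_pmf (UNIV :: 'k set) False
                 (\<lambda>i. bernoulli_pmf (plus_prob eps CARD('k) C ((M *v g) $ i)))))
        = (\<Sum>b\<in>UNIV. indicator A (outp C M b) * ennreal (pmf (Pi_pmf (UNIV :: 'k set) False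
                 (\<lambda>i. bernoulli_pmf (plus_prob eps CARD('k) C ((M *v g) $ i)))) b))"
      by (rule nn_integral_measure_pmf_support) auto
    also have "\<dots> = (\<Sum>b\<in>UNIV. ennreal (wt TYPE('k) eps C M g b) * indicator A (outp C M b))"
    proof (rule sum.cong[OF refl])
      fix b :: "'k \<Rightarrow> bool"
      have "pmf (Pi_pmf (UNIV :: 'k set) False
                 (\<lambda>i. bernoulli_pmf (plus_prob eps CARD('k) C ((M *v g) $ i)))) b = wt TYPE('k) eps C M g b"
        unfolding wt_def using pp01[OF assms, of "CARD('k)"]
        by (subst pmf_Pi') (auto intro!: prod.cong)
      then show "indicator A (outp C M b) * ennreal (pmf (Pi_pmf (UNIV :: 'k set) False
                 (\<lambda>i. bernoulli_pmf (plus_prob eps CARD('k) C ((M *v g) $ i)))) b)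
           = ennreal (wt TYPE('k) eps C M g b) * indicator A (outp C M b)"
        by (simp add: mult.commute)
    qed
    finally show "(\<integral>\<^sup>+b. indicator A (outp C M b) \<partial>measure_pmf (Pi_pmf (UNIV :: 'k set) False
                 (\<lambda>i. bernoulli_pmf (plus_prob eps CARD('k) C ((M *v g) $ i)))))
        = (\<Sum>b\<in>UNIV. ennreal (wt TYPE('k) eps C M g b) * indicator A (outp C M b))" .
  qed
  finally show ?thesis .
qed

lemma wt_nonneg:
  assumes "eps > 0" "C > 0"
  shows "0 \<le> wt TYPE('k::finite) eps C M g b"
  unfolding wt_def using pp01[OF assms, of "CARD('k)"] by (auto intro!: prod_nonneg)

lemma wt_le:
  assumes "eps > 0" "C > 0"
  shows "wt TYPE('k::finite) eps C M g b \<le> exp eps * wt TYPE('k) eps C M g' b"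
proof -
  define E where "E = exp (eps / real CARD('k))"
  have n0: "CARD('k) > 0" by simp
  have E1: "E \<ge> 1" unfolding E_def using assms by simp
  note B = plus_prob_bounds[OF assms n0]
  have "wt TYPE('k) eps C M g b \<le> (\<Prod>i\<in>UNIV. E * (if b i then plus_prob eps CARD('k) C ((M *v g') $ i)
                         else 1 - plus_prob eps CARD('k) C ((M *v g') $ i)))"
    unfolding wt_def
  proof (rule prod_mono)
    fix i :: 'k
    note R = ratio_le[OF E1 B[of "(M *v g) $ i", folded E_def] B[of "(M *v g') $ i", folded E_def]]
    show "0 \<le> (if b i then plus_prob eps CARD('k) C ((M *v g) $ i)
                         else 1 - plus_prob eps CARD('k) C ((M *v g) $ i)) \<and>
          (if b i then plus_prob eps CARD('k) C ((M *v g) $ i)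
                         else 1 - plus_prob eps CARD('k) C ((M *v g) $ i))
          \<le> E * (if b i then plus_prob eps CARD('k) C ((M *v g') $ i)
                         else 1 - plus_prob eps CARD('k) C ((M *v g') $ i))"
      using R by auto
  qed
  also have "\<dots> = E ^ CARD('k) * wt TYPE('k) eps C M g' b"
    unfolding wt_def by (simp add: prod.distrib)
  also have "E ^ CARD('k) = exp eps"
    unfolding E_def by (simp add: exp_of_nat_mult[symmetric])
  finally show ?thesis .
qed

lemma finite_entry: "finite (set_pmf entry_pmf)"
  unfolding entry_pmf_def by simp

lemma finite_rand_matrix: "finite (set_pmf (rand_matrix :: (real^'d::finite^'k::finite) pmf))"
proof -
  have "set_pmf (Pi_pmf (UNIV :: ('k \<times> 'd) set) 0 (\<lambda>_. entry_pmf)) \<subseteq> Pi UNIV (\<lambda>_. set_pmf entry_pmf)"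
    using set_Pi_pmf_subset'[of "UNIV :: ('k \<times> 'd) set" 0 "\<lambda>_. entry_pmf"] by (auto simp: PiE_dflt_def)
  moreover have "finite (Pi (UNIV :: ('k \<times> 'd) set) (\<lambda>_. set_pmf entry_pmf))"
    using finite_PiE[of "UNIV :: ('k \<times> 'd) set" "\<lambda>_. set_pmf entry_pmf"] finite_entry
    by (simp add: PiE_UNIV_domain)
  ultimately have "finite (set_pmf (Pi_pmf (UNIV :: ('k \<times> 'd) set) 0 (\<lambda>_. entry_pmf)))"
    by (rule finite_subset)
  then show ?thesis unfolding rand_matrix_def by simp
qed

lemma cont_pp: "C > 0 \<Longrightarrow> continuous_on UNIV (\<lambda>u. plus_prob eps n C u)"
  unfolding plus_prob_def clip_def by (intro continuous_intros) auto
lemma cont_lin: "continuous_on UNIV (\<lambda>g. ((M::real^'d::finite^'k::finite) *v g) $ i)"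
  by (intro continuous_intros)
lemma cont_fac: "C > 0 \<Longrightarrow> continuous_on UNIV (\<lambda>g. if P then plus_prob eps n C (((M::real^'d::finite^'k::finite) *v g) $ i)
    else 1 - plus_prob eps n C ((M *v g) $ i))"
proof -
  assume C: "C > 0"
  have c: "continuous_on UNIV (\<lambda>g. plus_prob eps n C (((M::real^'d::finite^'k::finite) *v g) $ i))"
    by (rule continuous_on_compose2[OF cont_pp[OF C] cont_lin]) auto
  show ?thesis using c by (cases P) (auto intro!: continuous_intros)
qed

lemma cont_wt:
  "C > 0 \<Longrightarrow> continuous_on UNIV (\<lambda>g. wt TYPE('k::finite) eps C M g b)"
  unfolding wt_def
  by (intro continuous_on_prod cont_fac) auto

lemma meas_PRS:
  assumes "eps > 0" "C > 0"
  shows "(\<lambda>g. emeasure (measure_pmf (PRS TYPE('k::finite) eps C g)) A) \<in> borel_measurable (borel :: (real^'d::finite) measure)"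
proof -
  have eq: "(\<lambda>g. emeasure (measure_pmf (PRS TYPE('k::finite) eps C g)) A) =
    (\<lambda>g. \<Sum>M\<in>set_pmf (rand_matrix :: (real^'d^'k) pmf).
       (\<Sum>b\<in>UNIV. ennreal (wt TYPE('k) eps C M g b) * indicator A (outp C M b)) * pmf rand_matrix M)"
    by (rule ext, subst emeasure_PRS[OF assms], rule nn_integral_measure_pmf_finite[OF finite_rand_matrix]) simp
  have "(\<lambda>g. wt TYPE('k) eps C M g b) \<in> borel_measurable borel" for M b
    by (rule borel_measurable_continuous_onI[OF cont_wt[OF assms(2)]])
  then show ?thesis unfolding eq by measurable
qed

lemma PRS_ratio:
  assumes "eps > 0" "C > 0"
  shows "emeasure (measure_pmf (PRS TYPE('k::finite) eps C (g :: real^'d::finite))) A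
     \<le> ennreal (exp eps) * emeasure (measure_pmf (PRS TYPE('k) eps C g')) A"
proof -
  have "(\<integral>\<^sup>+M. (\<Sum>b\<in>UNIV. ennreal (wt TYPE('k) eps C M g b) * indicator A (outp C M b)) \<partial>(rand_matrix :: (real^'d^'k) pmf))
     \<le> (\<integral>\<^sup>+M. ennreal (exp eps) * (\<Sum>b\<in>UNIV. ennreal (wt TYPE('k) eps C M g' b) * indicator A (outp C M b)) \<partial>(rand_matrix :: (real^'d^'k) pmf))"
  proof (rule nn_integral_mono)
    fix M :: "real^'d^'k"
    show "(\<Sum>b\<in>UNIV. ennreal (wt TYPE('k) eps C M g b) * indicator A (outp C M b))
       \<le> ennreal (exp eps) * (\<Sum>b\<in>UNIV. ennreal (wt TYPE('k) eps C M g' b) * indicator A (outp C M b))"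
      unfolding sum_distrib_left
    proof (rule sum_mono)
      fix b :: "'k \<Rightarrow> bool"
      have "ennreal (wt TYPE('k) eps C M g b) \<le> ennreal (exp eps * wt TYPE('k) eps C M g' b)"
        using wt_le[OF assms] by (rule ennreal_leI)
      also have "\<dots> = ennreal (exp eps) * ennreal (wt TYPE('k) eps C M g' b)"
        by (rule ennreal_mult) (simp, rule wt_nonneg[OF assms])
      finally show "ennreal (wt TYPE('k) eps C M g b) * indicator A (outp C M b)
         \<le> ennreal (exp eps) * (ennreal (wt TYPE('k) eps C M g' b) * indicator A (outp C M b))"
        by (simp add: mult.assoc[symmetric] mult_right_mono)
    qed
  qed
  also have "\<dots> = ennreal (exp eps) * (\<integral>\<^sup>+M. (\<Sum>b\<in>UNIV. ennreal (wt TYPE('k) eps C M g' b) * indicator A (outp C M b)) \<partial>(rand_matrix :: (real^'d^'k) pmf))"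
    by (rule nn_integral_cmult) simp
  finally show ?thesis by (simp add: emeasure_PRS[OF assms])
qed

lemma mix:
  fixes F :: "'a \<Rightarrow> 'b measure" and mu mu' :: "'a measure" and e :: real
  assumes "prob_space mu" "prob_space mu'" "sets mu = sets mu'"
    and sub: "\<And>g. subprob_space (F g)"
    and setsF: "\<And>g. sets (F g) = sets N"
    and meas: "\<And>A. A \<in> sets N \<Longrightarrow> (\<lambda>g. emeasure (F g) A) \<in> borel_measurable mu"
    and G: "G \<in> sets N"
    and e: "e \<ge> 0"
    and rat: "\<And>g g'. emeasure (F g) G \<le> ennreal e * emeasure (F g') G"
  shows "measure (mu \<bind> F) G \<le> e * measure (mu' \<bind> F) G"
proof -
  interpret P: prob_space mu by fact
  interpret P': prob_space mu' by fact
  have mF: "F \<in> measurable mu (subprob_algebra N)"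
    by (rule measurable_subprob_algebra) (auto simp: sub setsF meas)
  have meas': "(\<lambda>g. emeasure (F g) G) \<in> borel_measurable mu'"
    using meas[OF G] measurable_cong_sets[OF assms(3) refl] by blast
  have mF': "F \<in> measurable mu' (subprob_algebra N)"
    using mF measurable_cong_sets[OF assms(3) refl] by blast
  have L: "emeasure (mu \<bind> F) G = (\<integral>\<^sup>+g. emeasure (F g) G \<partial>mu)"
    by (rule emeasure_bind[OF P.not_empty mF G])
  have R: "emeasure (mu' \<bind> F) G = (\<integral>\<^sup>+g. emeasure (F g) G \<partial>mu')"
    by (rule emeasure_bind[OF P'.not_empty mF' G])
  define s where "s = (INF g'. ennreal e * emeasure (F g') G)"
  have "(\<integral>\<^sup>+g. emeasure (F g) G \<partial>mu) \<le> (\<integral>\<^sup>+g. s \<partial>mu)"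
    by (rule nn_integral_mono) (auto simp: s_def intro!: INF_greatest rat)
  also have "\<dots> = s" by (simp add: P.emeasure_space_1)
  also have "s = (\<integral>\<^sup>+g. s \<partial>mu')" by (simp add: P'.emeasure_space_1)
  also have "\<dots> \<le> (\<integral>\<^sup>+g. ennreal e * emeasure (F g) G \<partial>mu')"
    by (rule nn_integral_mono) (auto simp: s_def intro!: INF_lower)
  also have "\<dots> = ennreal e * (\<integral>\<^sup>+g. emeasure (F g) G \<partial>mu')"
    by (rule nn_integral_cmult[OF meas'])
  finally have le: "emeasure (mu \<bind> F) G \<le> ennreal e * emeasure (mu' \<bind> F) G"
    using L R by simp
  have "emeasure (mu' \<bind> F) G \<le> 1"
  proof -
    have "(\<integral>\<^sup>+g. emeasure (F g) G \<partial>mu') \<le> (\<integral>\<^sup>+g. 1 \<partial>mu')"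
      by (rule nn_integral_mono) (simp add: subprob_space.subprob_emeasure_le_1[OF sub])
    then show ?thesis using R by (simp add: P'.emeasure_space_1)
  qed
  then have fin: "ennreal e * emeasure (mu' \<bind> F) G < top"
    by (metis ennreal_less_top ennreal_mult_less_top ennreal_one_less_top le_less_trans)
  have "measure (mu \<bind> F) G = enn2real (emeasure (mu \<bind> F) G)" by (simp add: measure_def)
  also have "\<dots> \<le> enn2real (ennreal e * emeasure (mu' \<bind> F) G)"
    by (rule enn2real_mono[OF le fin])
  also have "\<dots> = e * measure (mu' \<bind> F) G"
    using e by (simp add: enn2real_mult measure_def)
  finally show ?thesis .
qed

theorem lemma3:
  fixes eps C :: real
    and \<Psi> :: "'psi set"
    and K :: "nat \<Rightarrow> 'psi \<Rightarrow> (real^'d) list \<Rightarrow> (real^'d) measure"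
  assumes "eps > 0" and "C > 0"
    and "CARD('k::finite) \<le> CARD('d::finite)"
    and "\<And>n psi h. psi \<in> \<Psi> \<Longrightarrow> prob_space (K n psi h)"
    and "\<And>n psi h. psi \<in> \<Psi> \<Longrightarrow> sets (K n psi h) = sets borel"
  shows "\<forall>n \<in> {1..N}. \<forall>psi \<in> \<Psi>. \<forall>psi' \<in> \<Psi>. \<forall>h. length h = n - 1 \<longrightarrow>
           (\<forall>G \<in> sets borel.
              measure (report_law eps C TYPE('k) (K n psi h)) G
                \<le> exp eps * measure (report_law eps C TYPE('k) (K n psi' h)) G)"
proof (intro ballI allI impI)
  fix n psi psi' h G
  assume psi: "psi \<in> \<Psi>" and psi': "psi' \<in> \<Psi>" and G: "G \<in> sets (borel :: (real^'d) measure)"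
  let ?F = "\<lambda>g. measure_pmf (PRS TYPE('k) eps C (g :: real^'d))"
  have sK: "sets (K n psi h) = sets borel" "sets (K n psi' h) = sets borel"
    using assms(5) psi psi' by auto
  show "measure (report_law eps C TYPE('k) (K n psi h)) G
                \<le> exp eps * measure (report_law eps C TYPE('k) (K n psi' h)) G"
    unfolding report_law_def
  proof (rule mix[where N = "count_space UNIV"])
    show "prob_space (K n psi h)" "prob_space (K n psi' h)" using assms(4) psi psi' by auto
    show "sets (K n psi h) = sets (K n psi' h)" using sK by simp
    show "\<And>g. subprob_space (?F g)"
      by (rule prob_space_imp_subprob_space[OF prob_space_measure_pmf])
    show "\<And>g. sets (?F g) = sets (count_space UNIV)" by simp
    show "\<And>A. A \<in> sets (count_space UNIV) \<Longrightarrow> (\<lambda>g. emeasure (?F g) A) \<in> borel_measurable (K n psi h)"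
      using meas_PRS[OF assms(1,2)] measurable_cong_sets[OF sK(1) refl] by blast
    show "G \<in> sets (count_space UNIV)" by simp
    show "0 \<le> exp eps" by simp
    show "\<And>g g'. emeasure (?F g) G \<le> ennreal (exp eps) * emeasure (?F g') G"
      by (rule PRS_ratio[OF assms(1,2)])
  qed
qed

end
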